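(* Let $\underline c<\overline c$ and $\underline s<\overline s$ be real numbers and write $\phi(c,s)=\sqrt{c^2+s^2}$. Suppose $$\phi(\overline c,\overline s)+\phi(\underline c,\underline s)-\phi(\overline c,\underline s)-\phi(\underline c,\overline s)<0.$$ Define $\eta^3=\frac{\phi(\overline c,\underline s)-\phi(\underline c,\underline s)}{\overline c-\underline c}$, $\delta^3=\frac{\phi(\underline c,\overline s)-\phi(\underline c,\underline s)}{\overline s-\underline s}$, $\nu^3=\phi(\underline c,\underline s)-\eta^3\underline c-\delta^3\underline s$, and $\eta^4=\frac{\phi(\overline c,\overline s)-\phi(\underline c,\overline s)}{\overline c-\underline c}$, $\delta^4=\frac{\phi(\overline c,\overline s)-\phi(\overline c,\underline s)}{\overline s-\underline s}$, $\nu^4=\phi(\overline c,\overline s)-\eta^4\overline c-\delta^4\overline s$. Then for $n=3,4$ and all $(c,s)\in[\underline c,\overline c]\times[\underline s,\overline s]$ we have $\nu^n+\eta^n c+\delta^n s\ge \sqrt{c^2+s^2}$. *)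

theory Defs
  imports Complex_Main
begin

definition phi :: "real \<Rightarrow> real \<Rightarrow> real" where
  "phi c s = sqrt (c\<^sup>2 + s\<^sup>2)"

end

theory Submission
  imports Defs
begin

lemma jensen4:
  fixes w1 w2 w3 w4 x1 x2 x3 x4 y1 y2 y3 y4 :: real
  assumes "w1 \<ge> 0" "w2 \<ge> 0" "w3 \<ge> 0" "w4 \<ge> 0"
  shows "phi (w1*x1+w2*x2+w3*x3+w4*x4) (w1*y1+w2*y2+w3*y3+w4*y4)
    \<le> w1 * phi x1 y1 + w2 * phi x2 y2 + w3 * phi x3 y3 + w4 * phi x4 y4"
proof -
  have e: "\<And>x y. phi x y = cmod (Complex x y)" by (simp add: phi_def complex_norm)
  have "Complex (w1*x1+w2*x2+w3*x3+w4*x4) (w1*y1+w2*y2+w3*y3+w4*y4)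
     = of_real w1 * Complex x1 y1 + of_real w2 * Complex x2 y2 + of_real w3 * Complex x3 y3 + of_real w4 * Complex x4 y4"
    by (simp add: complex_eq_iff)
  hence "phi (w1*x1+w2*x2+w3*x3+w4*x4) (w1*y1+w2*y2+w3*y3+w4*y4)
     = cmod (of_real w1 * Complex x1 y1 + of_real w2 * Complex x2 y2 + of_real w3 * Complex x3 y3 + of_real w4 * Complex x4 y4)"
    by (simp add: e)
  also have "\<dots> \<le> cmod (of_real w1 * Complex x1 y1) + cmod (of_real w2 * Complex x2 y2) + cmod (of_real w3 * Complex x3 y3) + cmod (of_real w4 * Complex x4 y4)"
    by (smt (verit) norm_triangle_ineq)
  also have "\<dots> = w1 * phi x1 y1 + w2 * phi x2 y2 + w3 * phi x3 y3 + w4 * phi x4 y4"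
    using assms by (simp add: e norm_mult)
  finally show ?thesis .
qed

theorem proposition4:
  fixes cl cu sl su :: real
  assumes "cl < cu" and "sl < su"
    and "phi cu su + phi cl sl - phi cu sl - phi cl su < 0"
  defines "eta3 \<equiv> (phi cu sl - phi cl sl) / (cu - cl)"
      and "delta3 \<equiv> (phi cl su - phi cl sl) / (su - sl)"
      and "nu3 \<equiv> phi cl sl - (phi cu sl - phi cl sl) / (cu - cl) * cl - (phi cl su - phi cl sl) / (su - sl) * sl"
      and "eta4 \<equiv> (phi cu su - phi cl su) / (cu - cl)"
      and "delta4 \<equiv> (phi cu su - phi cu sl) / (su - sl)"
      and "nu4 \<equiv> phi cu su - (phi cu su - phi cl su) / (cu - cl) * cu - (phi cu su - phi cu sl) / (su - sl) * su"
  shows "\<forall>c\<in>{cl..cu}. \<forall>s\<in>{sl..su}.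
           nu3 + eta3 * c + delta3 * s \<ge> sqrt (c\<^sup>2 + s\<^sup>2) \<and>
           nu4 + eta4 * c + delta4 * s \<ge> sqrt (c\<^sup>2 + s\<^sup>2)"
proof (intro ballI)
  fix c s assume c: "c \<in> {cl..cu}" and s: "s \<in> {sl..su}"
  define P1 where "P1 = phi cl sl"
  define P2 where "P2 = phi cu sl"
  define P3 where "P3 = phi cl su"
  define P4 where "P4 = phi cu su"
  define a where "a = (c - cl) / (cu - cl)"
  define b where "b = (s - sl) / (su - sl)"
  have a0: "0 \<le> a" "a \<le> 1" using c assms(1) by (auto simp: a_def field_simps)
  have b0: "0 \<le> b" "b \<le> 1" using s assms(2) by (auto simp: b_def field_simps)
  have ca: "c = (1-a)*cl + a*cu"
  proof -
    have "(1-a)*cl + a*cu = cl + a*(cu-cl)" by (simp add: algebra_simps)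
    also have "\<dots> = c" using assms(1) by (simp add: a_def)
    finally show ?thesis by simp
  qed
  have sb: "s = (1-b)*sl + b*su"
  proof -
    have "(1-b)*sl + b*su = sl + b*(su-sl)" by (simp add: algebra_simps)
    also have "\<dots> = s" using assms(2) by (simp add: b_def)
    finally show ?thesis by simp
  qed
  have cc: "c = (1-a)*(1-b)*cl + a*(1-b)*cu + (1-a)*b*cl + a*b*cu" using ca by (simp add: algebra_simps)
  have ss: "s = (1-a)*(1-b)*sl + a*(1-b)*sl + (1-a)*b*su + a*b*su" using sb by (simp add: algebra_simps)
  have J: "sqrt (c\<^sup>2 + s\<^sup>2) \<le> (1-a)*(1-b)*P1 + a*(1-b)*P2 + (1-a)*b*P3 + a*b*P4"
    unfolding P1_def P2_def P3_def P4_def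
    using jensen4[of "(1-a)*(1-b)" "a*(1-b)" "(1-a)*b" "a*b" cl cu cl cu sl sl su su] a0 b0 cc ss
    by (simp add: phi_def)
  have L3: "nu3 + eta3 * c + delta3 * s = P1 + a*(P2-P1) + b*(P3-P1)"
  proof -
    have "nu3 + eta3 * c + delta3 * s = P1 + eta3*(c-cl) + delta3*(s-sl)"
    proof -
      have "nu3 = P1 - eta3*cl - delta3*sl" unfolding nu3_def eta3_def delta3_def P1_def by simp
      thus ?thesis by (simp add: algebra_simps)
    qed
    moreover have "eta3*(c-cl) = a*(P2-P1)" unfolding eta3_def a_def P1_def P2_def by simp
    moreover have "delta3*(s-sl) = b*(P3-P1)" unfolding delta3_def b_def P1_def P3_def by simp
    ultimately show ?thesis by simp
  qed
  have L4: "nu4 + eta4 * c + delta4 * s = P4 - (1-a)*(P4-P3) - (1-b)*(P4-P2)"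
  proof -
    have "nu4 + eta4 * c + delta4 * s = P4 - eta4*(cu-c) - delta4*(su-s)"
    proof -
      have "nu4 = P4 - eta4*cu - delta4*su" unfolding nu4_def eta4_def delta4_def P4_def by simp
      thus ?thesis by (simp add: algebra_simps)
    qed
    moreover have "1-a = (cu-c)/(cu-cl)" using assms(1) unfolding a_def by (simp add: field_simps)
    moreover have "1-b = (su-s)/(su-sl)" using assms(2) unfolding b_def by (simp add: field_simps)
    moreover have "eta4*(cu-c) = (cu-c)/(cu-cl)*(P4-P3)" unfolding eta4_def P4_def P3_def by simp
    moreover have "delta4*(su-s) = (su-s)/(su-sl)*(P4-P2)" unfolding delta4_def P4_def P2_def by simp
    ultimately show ?thesis by simp
  qed
  have H: "P4 + P1 - P2 - P3 < 0" using assms(3) by (simp add: P1_def P2_def P3_def P4_def)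
  have m1: "a*b*(P2+P3-P1-P4) \<ge> 0" using a0 b0 H by simp
  have m2: "(1-a)*(1-b)*(P2+P3-P1-P4) \<ge> 0" using a0 b0 H by simp
  have e3: "P1 + a*(P2-P1) + b*(P3-P1) - ((1-a)*(1-b)*P1 + a*(1-b)*P2 + (1-a)*b*P3 + a*b*P4) = a*b*(P2+P3-P1-P4)"
    by (simp add: algebra_simps)
  have e4: "P4 - (1-a)*(P4-P3) - (1-b)*(P4-P2) - ((1-a)*(1-b)*P1 + a*(1-b)*P2 + (1-a)*b*P3 + a*b*P4) = (1-a)*(1-b)*(P2+P3-P1-P4)"
    by (simp add: algebra_simps)
  show "nu3 + eta3 * c + delta3 * s \<ge> sqrt (c\<^sup>2 + s\<^sup>2) \<and>
           nu4 + eta4 * c + delta4 * s \<ge> sqrt (c\<^sup>2 + s\<^sup>2)"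
    using J L3 L4 e3 e4 m1 m2 by linarith
qed

end
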